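(* In the setting described in the context (with $n$ sufficiently large), let $\kappa>0$ and let $\eta$ satisfy $0\le \eta\le \frac{1}{\sqrt n}$. Then any polytope $P\subseteq\mathbb{R}^{n+1}$ such that \[ P\subseteq K(\eta,\kappa)\subseteq \frac{n}{96\Delta^2\max\{\kappa,1\}}\,P \] has at least $\frac{m}{n}$ vertices.
   Context: Let $C_1$ be an absolute constant such that for every sufficiently large $n$ and every $2\le m\le \exp(n/C_1)$ there exist $y_1,\dots,y_m\in\mathbb{R}^n$ with $\frac12\sqrt n\le\|y_i\|\le 2\sqrt n$ and $|\langle y_i,y_j\rangle|\le C_1\sqrt{n\log m}$ for $i\ne j$. Let $C_2$ be an absolute constant such that for all unit vectors $v_1,\dots,v_m\in S^{n-1}$ and $X$ distributed as $N(0,I_n)$, uniformly on $\sqrt n S^{n-1}$, or uniformly on $\sqrt n B_2^n$, one has $\mathbb{P}(\max_{i}|\langle v_i,X\rangle|\ge C_2\sqrt{\log m})\le m^{-10}$. Set $C_0=\max(C_1,100C_2)$. Let $n$ be sufficiently large, $m$ an integer with $C_0 n\le m\le \exp(n/C_0)$, and $\Delta=C_0\sqrt{\log m}$. Let $x_1,\dots,x_m\in\mathbb{R}^n$ satisfy $\frac{\sqrt n}{2\Delta}\le\|x_i\|\le\frac{2\sqrt n}{\Delta}$ for all $i$ and $|\langle x_i,x_j\rangle|\le \frac{\sqrt n}{\Delta}$ for $i\ne j$. $B_2^n$ is the Euclidean unit ball. Define $Q=\operatorname{conv}\{\pm x_i\}$, $Q_1=\operatorname{conv}(Q\cup B_2^n)$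 and $Q_1^\circ=(Q_1)^\circ=Q^\circ\cap B_2^n$, where $L^\circ=\{y:\langle y,z\rangle\le1\ \forall z\in L\}$. Equip $\mathbb{R}^{n+1}$ with orthonormal basis $e_0,e_1,\dots,e_n$ and identify $\mathbb{R}^n$ with $\operatorname{span}\{e_1,\dots,e_n\}$. For $\eta\in\mathbb{R}$ and $\kappa>0$ set \[ K(\eta,\kappa)=\operatorname{conv}\big((1-\eta)e_0+Q,\ -\kappa\eta e_0+\kappa Q_1^\circ\big)\subseteq\mathbb{R}^{n+1}. \] *)

theory Defs
  imports "HOL-Analysis.Analysis" "HOL-Probability.Probability" "HOL-Library.Function_Algebras"
begin

text \<open>Finite-dimensional Euclidean spaces of varying dimension are represented inside the
  real vector space of all functions nat => real: R^n is the set of functions supported on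
  the index set {1..n} (coordinates e_1,...,e_n), and R^(n+1) is the set of functions supported
  on {0..n} (coordinates e_0,e_1,...,e_n), so that R^n is literally the span of e_1..e_n.\<close>

instantiation "fun" :: (type, real_vector) real_vector
begin
definition scaleR_fun :: "real \<Rightarrow> ('a \<Rightarrow> 'b) \<Rightarrow> 'a \<Rightarrow> 'b" where
  "scaleR_fun r f = (\<lambda>x. r *\<^sub>R f x)"
instance
  by standard (auto simp: scaleR_fun_def fun_eq_iff scaleR_add_right scaleR_add_left algebra_simps)
end

definition supp_in :: "nat set \<Rightarrow> (nat \<Rightarrow> real) set" where
  "supp_in I = {x. \<forall>i. i \<notin> I \<longrightarrow> x i = 0}"

definition Rn :: "nat \<Rightarrow> (nat \<Rightarrow> real) set" where
  "Rn n = supp_in {1..n}"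
definition Rn1 :: "nat \<Rightarrow> (nat \<Rightarrow> real) set" where
  "Rn1 n = supp_in {0..n}"

definition e0 :: "nat \<Rightarrow> real" where
  "e0 = (\<lambda>i. if i = 0 then 1 else 0)"

definition ip :: "nat \<Rightarrow> (nat \<Rightarrow> real) \<Rightarrow> (nat \<Rightarrow> real) \<Rightarrow> real" where
  "ip n x y = (\<Sum>i\<in>{1..n}. x i * y i)"
definition nrm :: "nat \<Rightarrow> (nat \<Rightarrow> real) \<Rightarrow> real" where
  "nrm n x = sqrt (ip n x x)"

definition ball2 :: "nat \<Rightarrow> (nat \<Rightarrow> real) set" where
  "ball2 n = {x \<in> Rn n. nrm n x \<le> 1}"

definition polar :: "nat \<Rightarrow> (nat \<Rightarrow> real) set \<Rightarrow> (nat \<Rightarrow> real) set" where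
  "polar n L = {y \<in> Rn n. \<forall>z\<in>L. ip n y z \<le> 1}"

definition Qset :: "nat \<Rightarrow> (nat \<Rightarrow> nat \<Rightarrow> real) \<Rightarrow> (nat \<Rightarrow> real) set" where
  "Qset m x = convex hull ((\<lambda>i. x i) ` {1..m} \<union> (\<lambda>i. - x i) ` {1..m})"
definition Q1set :: "nat \<Rightarrow> nat \<Rightarrow> (nat \<Rightarrow> nat \<Rightarrow> real) \<Rightarrow> (nat \<Rightarrow> real) set" where
  "Q1set n m x = convex hull (Qset m x \<union> ball2 n)"
definition Q1polar :: "nat \<Rightarrow> nat \<Rightarrow> (nat \<Rightarrow> nat \<Rightarrow> real) \<Rightarrow> (nat \<Rightarrow> real) set" where
  "Q1polar n m x = polar n (Q1set n m x)"

definition Kset :: "nat \<Rightarrow> nat \<Rightarrow> (nat \<Rightarrow> nat \<Rightarrow> real) \<Rightarrow> real \<Rightarrow> real \<Rightarrow> (nat \<Rightarrow> real) set" where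
  "Kset n m x \<eta> \<kappa> = convex hull
     ((\<lambda>q. (1 - \<eta>) *\<^sub>R e0 + q) ` Qset m x \<union>
      (\<lambda>q. (- (\<kappa> * \<eta>)) *\<^sub>R e0 + \<kappa> *\<^sub>R q) ` Q1polar n m x)"

definition vertices :: "(nat \<Rightarrow> real) set \<Rightarrow> (nat \<Rightarrow> real) set" where
  "vertices P = {v. v extreme_point_of P}"

text \<open>Probability measures on R^n, realised as product measures over the index set {1..n}:
  standard Gaussian N(0,I_n); uniform on sqrt n B_2^n; uniform (normalised surface) measure on
  sqrt n S^(n-1), obtained as the image of the uniform measure on the ball under radial
  projection x |-> sqrt n x/|x|.\<close>
definition gauss_n :: "nat \<Rightarrow> (nat \<Rightarrow> real) measure" where
  "gauss_n n = PiM {1..n} (\<lambda>_. density lborel std_normal_density)"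
definition unif_ball_n :: "nat \<Rightarrow> (nat \<Rightarrow> real) measure" where
  "unif_ball_n n = uniform_measure (PiM {1..n} (\<lambda>_. lborel))
      {x \<in> space (PiM {1..n} (\<lambda>_. lborel :: real measure)). nrm n x \<le> sqrt (real n)}"
definition unif_sphere_n :: "nat \<Rightarrow> (nat \<Rightarrow> real) measure" where
  "unif_sphere_n n = distr (unif_ball_n n) (PiM {1..n} (\<lambda>_. borel))
      (\<lambda>x. restrict (\<lambda>i. sqrt (real n) * x i / nrm n x) {1..n})"

definition C1_prop :: "real \<Rightarrow> bool" where
  "C1_prop C1 \<longleftrightarrow> (\<exists>N. \<forall>n\<ge>N. \<forall>m::nat. 2 \<le> m \<and> real m \<le> exp (real n / C1) \<longrightarrow>
     (\<exists>y::nat \<Rightarrow> nat \<Rightarrow> real.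
        (\<forall>i\<in>{1..m}. y i \<in> Rn n \<and> sqrt (real n) / 2 \<le> nrm n (y i) \<and> nrm n (y i) \<le> 2 * sqrt (real n)) \<and>
        (\<forall>i\<in>{1..m}. \<forall>j\<in>{1..m}. i \<noteq> j \<longrightarrow>
            \<bar>ip n (y i) (y j)\<bar> \<le> C1 * sqrt (real n * ln (real m)))))"

definition C2_prop :: "real \<Rightarrow> bool" where
  "C2_prop C2 \<longleftrightarrow> (\<forall>n::nat\<ge>1. \<forall>m::nat\<ge>1. \<forall>v::nat \<Rightarrow> nat \<Rightarrow> real.
     (\<forall>j\<in>{1..m}. v j \<in> Rn n \<and> nrm n (v j) = 1) \<longrightarrow>
     (\<forall>M \<in> {gauss_n n, unif_sphere_n n, unif_ball_n n}.
        measure M {X \<in> space M. \<exists>j\<in>{1..m}. \<bar>ip n (v j) X\<bar> \<ge> C2 * sqrt (ln (real m))}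
          \<le> real m powr (-10)))"

end

theory Submission
  imports Defs
begin



lemma vert_lemma:
  assumes "polytope (P::(nat\<Rightarrow>real) set)"
  shows "\<exists>W. finite W \<and> W \<subseteq> vertices P \<and> P = convex hull W \<and> finite (vertices P)"
proof -
  obtain v where v: "finite v" "P = convex hull v" using assms unfolding polytope_def by blast
  have "\<exists>W. (W \<subseteq> v \<and> convex hull W = P) \<and> (\<forall>W'. (W' \<subseteq> v \<and> convex hull W' = P) \<longrightarrow> card W \<le> card W')"
    apply (rule ex_has_least_nat[of "\<lambda>W. W \<subseteq> v \<and> convex hull W = P" v card])
    using v by simp
  then obtain W where W: "W \<subseteq> v" "convex hull W = P"
    and Wmin: "\<And>W'. W' \<subseteq> v \<Longrightarrow> convex hull W' = P \<Longrightarrow> card W \<le> card W'" by blast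
  have fW: "finite W" using W v finite_subset by blast
  have "W \<subseteq> vertices P"
  proof
    fix a assume a: "a \<in> W"
    have ins: "insert a (W - {a}) = W" using a by blast
    have "a \<notin> convex hull (W - {a})"
    proof
      assume "a \<in> convex hull (W - {a})"
      then have "convex hull (insert a (W - {a})) = convex hull (W - {a})" by (rule hull_redundant)
      then have "convex hull (W - {a}) = P" using W ins by simp
      then have "card W \<le> card (W - {a})" using W(1) by (intro Wmin) auto
      moreover have "card (W - {a}) < card W" using fW a by (meson card_Diff1_less)
      ultimately show False by simp
    qed
    then have "a extreme_point_of (convex hull (insert a (W - {a})))"
      using fW by (intro extreme_point_of_convex_hull_insert) auto
    then show "a \<in> vertices P" using W ins by (simp add: vertices_def)
  qed
  moreover have "vertices P \<subseteq> v" using v extreme_point_of_convex_hull by (auto simp: vertices_def)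
  then have "finite (vertices P)" using v(1) by (rule finite_subset)
  ultimately show ?thesis using fW W by blast
qed



definition lin :: "((nat \<Rightarrow> real) \<Rightarrow> real) \<Rightarrow> bool" where
  "lin h \<longleftrightarrow> (\<forall>y z u v. h (u *\<^sub>R y + v *\<^sub>R z) = u * h y + v * h z)"

lemma lin_ip: "lin (ip n a)"
  unfolding lin_def ip_def by (simp add: scaleR_fun_def sum.distrib sum_distrib_left algebra_simps)

lemma lin_coord: "lin (\<lambda>z. z k)"
  unfolding lin_def by (simp add: scaleR_fun_def)

lemma lin_comb: "lin h \<Longrightarrow> lin g \<Longrightarrow> lin (\<lambda>z. a * h z + b * g z)"
  unfolding lin_def by (simp add: algebra_simps)

lemma lin_sum: "(\<And>i. i \<in> S \<Longrightarrow> lin (h i)) \<Longrightarrow> lin (\<lambda>z. \<Sum>i\<in>S. h i z)"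
  unfolding lin_def by (simp add: sum.distrib sum_distrib_left)

lemma lin_add: "lin h \<Longrightarrow> h (y + z) = h y + h z"
  unfolding lin_def by (metis mult_1 scaleR_one)

lemma lin_scale: "lin h \<Longrightarrow> h (u *\<^sub>R y) = u * h y"
  unfolding lin_def by (metis add.right_neutral mult_zero_left scaleR_zero_left)

lemma lin_hull_le:
  assumes "lin h" "\<And>g. g \<in> G \<Longrightarrow> h (c + g) \<le> d" "w \<in> convex hull G"
  shows "h (c + w) \<le> d"
proof -
  have "convex {w. h (c + w) \<le> d}"
    unfolding convex_def
  proof (intro ballI allI impI, clarsimp)
    fix y z u v assume y: "h (c + y) \<le> d" and z: "h (c + z) \<le> d" and u: "0 \<le> (u::real)" and v: "0 \<le> v" and uv: "u + v = 1"
    have "h (c + (u *\<^sub>R y + v *\<^sub>R z)) = u * h (c + y) + v * h (c + z)"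
      using assms(1) uv by (simp add: lin_add lin_scale algebra_simps) (metis distrib_right mult_1)
    also have "\<dots> \<le> u * d + v * d" using y z u v by (intro add_mono mult_left_mono) auto
    also have "\<dots> = d" using uv by (metis distrib_right mult_1)
    finally show "h (c + (u *\<^sub>R y + v *\<^sub>R z)) \<le> d" .
  qed
  then have "convex hull G \<subseteq> {w. h (c + w) \<le> d}"
    by (intro hull_minimal) (use assms(2) in auto)
  then show ?thesis using assms(3) by auto
qed

lemma lin_hull_lt:
  assumes "lin h" "\<And>g. g \<in> G \<Longrightarrow> h g < d" "w \<in> convex hull G"
  shows "h w < d"
proof -
  have "convex {w. h w < d}"
    unfolding convex_def
  proof (intro ballI allI impI, clarsimp)
    fix y z u v assume y: "h y < d" and z: "h z < d" and u: "0 \<le> (u::real)" and v: "0 \<le> v" and uv: "u + v = 1"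
    have "h (u *\<^sub>R y + v *\<^sub>R z) = u * h y + v * h z"
      using assms(1) by (simp add: lin_def)
    also have "\<dots> < u * d + v * d"
    proof (cases "u = 0")
      case True then show ?thesis using z uv by simp
    next
      case False then have "u * h y < u * d" using u y by simp
      moreover have "v * h z \<le> v * d" using v z by (simp add: mult_left_mono)
      ultimately show ?thesis by simp
    qed
    also have "\<dots> = d" using uv by (metis distrib_right mult_1)
    finally show "h (u *\<^sub>R y + v *\<^sub>R z) < d" .
  qed
  then have "convex hull G \<subseteq> {w. h w < d}"
    by (intro hull_minimal) (use assms(2) in auto)
  then show ?thesis using assms(3) by auto
qed



lemma ip_e0: "ip n a e0 = 0"
  unfolding ip_def e0_def by simp

lemma ip_sym: "ip n a b = ip n b a"
  unfolding ip_def by (simp add: mult.commute)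

lemma ip_neg: "ip n a (- b) = - ip n a b"
  unfolding ip_def by (simp add: sum_negf)

lemma ip_add2: "ip n a (b + c) = ip n a b + ip n a c"
  unfolding ip_def by (simp add: sum.distrib algebra_simps)

lemma ip_scale2: "ip n a (r *\<^sub>R b) = r * ip n a b"
  unfolding ip_def by (simp add: scaleR_fun_def sum_distrib_left algebra_simps)

lemma ip_self_nonneg: "ip n a a \<ge> 0"
  unfolding ip_def by (simp add: sum_nonneg)

lemma Rn_0: "x \<in> Rn n \<Longrightarrow> x 0 = 0"
  unfolding Rn_def supp_in_def by auto

lemma coord_T: "((r::real) *\<^sub>R e0 + q) 0 = r + q 0"
  by (simp add: scaleR_fun_def e0_def)

lemma coord_T2: "((r::real) *\<^sub>R e0 + s *\<^sub>R q) 0 = r + s * q 0"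
  by (simp add: scaleR_fun_def e0_def)



lemma sc_app: "((r::real) *\<^sub>R (y::nat\<Rightarrow>real)) k = r * y k" by (simp add: scaleR_fun_def)
lemma ip_diff2: "ip n a (b - c) = ip n a b - ip n a c"
  unfolding ip_def by (simp add: sum_subtractf algebra_simps)
lemma e0_app0: "e0 0 = 1" by (simp add: e0_def)

lemma main_lemma:
  fixes n m :: nat and x :: "nat \<Rightarrow> nat \<Rightarrow> real" and \<eta> \<kappa> \<Delta> :: real and P :: "(nat \<Rightarrow> real) set"
  assumes n4: "n \<ge> 4" and D1: "\<Delta> > 0 \<Longrightarrow> \<Delta> \<ge> 1"
   and xs: "\<forall>i\<in>{1..m}. x i \<in> Rn n \<and> sqrt (real n) / (2 * \<Delta>) \<le> nrm n (x i) \<and> nrm n (x i) \<le> 2 * sqrt (real n) / \<Delta>"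
   and xip: "\<forall>i\<in>{1..m}. \<forall>j\<in>{1..m}. i \<noteq> j \<longrightarrow> \<bar>ip n (x i) (x j)\<bar> \<le> sqrt (real n) / \<Delta>"
   and kap: "0 < \<kappa>" and eta0: "0 \<le> \<eta>" and eta1: "\<eta> \<le> 1 / sqrt (real n)"
   and Ppol: "polytope P" and PK: "P \<subseteq> Kset n m x \<eta> \<kappa>"
   and KP: "Kset n m x \<eta> \<kappa> \<subseteq> (\<lambda>p. (real n / (96 * \<Delta>\<^sup>2 * max \<kappa> 1)) *\<^sub>R p) ` P"
  shows "real (card (vertices P)) \<ge> real m / real n"
proof (cases "m = 0")
  case True then show ?thesis by simp
next
  case False
  then have m1: "1 \<in> {1..m}" by simp
  define lam where "lam = real n / (96 * \<Delta>\<^sup>2 * max \<kappa> 1)"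
  define M where "M = max \<kappa> 1"
  define T where "T = (\<lambda>q::nat\<Rightarrow>real. (1 - \<eta>) *\<^sub>R e0 + q)"
  define R where "R = (\<lambda>r::nat\<Rightarrow>real. (- (\<kappa> * \<eta>)) *\<^sub>R e0 + \<kappa> *\<^sub>R r)"
  define gens where "gens = (\<lambda>i. x i) ` {1..m} \<union> (\<lambda>i. - x i) ` {1..m}"
  have Kdef: "Kset n m x \<eta> \<kappa> = convex hull (T ` Qset m x \<union> R ` Q1polar n m x)"
    unfolding Kset_def T_def R_def by simp
  have Qdef: "Qset m x = convex hull gens" unfolding Qset_def gens_def by simp
  have KP': "Kset n m x \<eta> \<kappa> \<subseteq> (\<lambda>p. lam *\<^sub>R p) ` P" using KP unfolding lam_def .
  have npos: "0 < n" using n4 by simp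
  have sn2: "sqrt (real n) \<ge> 2"
    using n4 real_sqrt_le_mono[of 4 "real n"] by simp
  have eta_half: "\<eta> \<le> 1/2"
  proof -
    have "1 / sqrt (real n) \<le> 1/2" using sn2 n4 by (intro divide_left_mono) auto
    then show ?thesis using eta1 by linarith
  qed
  have xQ: "x i \<in> Qset m x" if "i \<in> {1..m}" for i
    unfolding Qdef gens_def by (rule hull_inc) (use that in auto)
  have nxQ: "- x i \<in> Qset m x" if "i \<in> {1..m}" for i
    unfolding Qdef gens_def by (rule hull_inc) (use that in auto)
  have xQ1: "x i \<in> Q1set n m x" if "i \<in> {1..m}" for i
    unfolding Q1set_def by (rule hull_inc) (use xQ[OF that] in auto)
  have TK: "T q \<in> Kset n m x \<eta> \<kappa>" if "q \<in> Qset m x" for q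
    unfolding Kdef by (rule hull_inc) (use that in auto)
  have x0: "x i 0 = 0" if "i \<in> {1..m}" for i using xs that Rn_0 by blast
  have polar_ip: "ip n (x i) r \<le> 1" if "i \<in> {1..m}" "r \<in> Q1polar n m x" for i r
    using that xQ1[OF that(1)] unfolding Q1polar_def polar_def by (auto simp: ip_sym)
  have polar_0: "r 0 = 0" if "r \<in> Q1polar n m x" for r
    using that unfolding Q1polar_def polar_def by (auto intro: Rn_0)
  have K0: "z 0 \<le> 1 - \<eta>" if "z \<in> Kset n m x \<eta> \<kappa>" for z
  proof -
    have "(\<lambda>z::nat\<Rightarrow>real. z 0) (0 + z) \<le> 1 - \<eta>"
    proof (rule lin_hull_le[OF lin_coord _ that[unfolded Kdef]])
      fix g assume g: "g \<in> T ` Qset m x \<union> R ` Q1polar n m x"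
      show "(0 + g) 0 \<le> 1 - \<eta>"
      proof (cases "g \<in> T ` Qset m x")
        case True
        then obtain q where q: "q \<in> convex hull gens" "g = T q" using Qdef by auto
        have "(\<lambda>z::nat\<Rightarrow>real. z 0) ((1 - \<eta>) *\<^sub>R e0 + q) \<le> 1 - \<eta>"
        proof (rule lin_hull_le[OF lin_coord _ q(1)])
          fix g' assume "g' \<in> gens"
          then show "((1 - \<eta>) *\<^sub>R e0 + g') 0 \<le> 1 - \<eta>"
            unfolding gens_def using x0 by (auto simp: coord_T sc_app e0_app0)
        qed
        then show ?thesis using q by (simp add: T_def)
      next
        case False
        then obtain r where r: "r \<in> Q1polar n m x" "g = R r" using g by auto
        have "(0 + g) 0 = - (\<kappa> * \<eta>)" using r polar_0[OF r(1)] by (simp add: R_def sc_app e0_app0)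
        moreover have "\<kappa> * \<eta> \<ge> 0" using kap eta0 by simp
        ultimately show ?thesis using eta_half by linarith
      qed
    qed
    then show ?thesis by simp
  qed
  have lam0: "lam \<ge> 0" unfolding lam_def by simp
  show ?thesis
  proof (cases "lam < 1")
    case True
    have "0 \<in> Qset m x"
    proof -
      have "(1/2::real) *\<^sub>R x 1 + (1/2::real) *\<^sub>R (- x 1) \<in> Qset m x"
        using xQ[OF m1] nxQ[OF m1] unfolding Qdef
        by (intro convexD[OF convex_convex_hull]) auto
      then show ?thesis by simp
    qed
    then have "T 0 \<in> Kset n m x \<eta> \<kappa>" by (rule TK)
    then obtain u where u: "u \<in> P" "T 0 = lam *\<^sub>R u" using KP' by auto
    have "(T 0) 0 = 1 - \<eta>" by (simp add: T_def sc_app e0_app0)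
    moreover have "(lam *\<^sub>R u) 0 = lam * u 0" by (simp add: sc_app)
    moreover have "u 0 \<le> 1 - \<eta>" using K0 u(1) PK by auto
    ultimately have "1 - \<eta> \<le> lam * (1 - \<eta>)" using u(2) lam0
      by (metis mult_left_mono)
    moreover have "lam * (1 - \<eta>) < 1 - \<eta>" using True eta_half by simp
    ultimately show ?thesis by simp
  next
    case False
    then have lam1: "lam \<ge> 1" by simp
    have Dne: "\<Delta> \<noteq> 0"
    proof
      assume "\<Delta> = 0" then have "lam = 0" by (simp add: lam_def)
      with lam1 show False by simp
    qed
    have Dpos: "\<Delta> > 0"
    proof (rule ccontr)
      assume "\<not> \<Delta> > 0" then have "\<Delta> < 0" using Dne by simp
      then have "2 * sqrt (real n) / \<Delta> < 0" using sn2 npos by (intro divide_pos_neg) auto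
      moreover have "nrm n (x 1) \<ge> 0" unfolding nrm_def using ip_self_nonneg by simp
      moreover have "nrm n (x 1) \<le> 2 * sqrt (real n) / \<Delta>" using xs m1 by blast
      ultimately show False by linarith
    qed
    have D1': "\<Delta> \<ge> 1" using D1 Dpos .
    define L where "L = sqrt (real n) / \<Delta>"
    have Lpos: "L > 0" using Dpos sn2 npos by (simp add: L_def)
    have L2: "L^2 = real n / \<Delta>^2" using n4 by (simp add: L_def power_divide)
    have Mge: "M \<ge> 1" "M \<ge> \<kappa>" by (simp_all add: M_def)
    have lamL: "lam = L^2 / (96 * M)" by (simp add: lam_def L2 M_def field_simps)
    have L2lam: "L^2 = 96 * M * lam" using lamL Mge by (simp add: field_simps)
    have L96: "L^2 \<ge> 96"
    proof -
      have "96 * 1 * 1 \<le> 96 * M * lam" using Mge lam1 by (intro mult_mono) auto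
      then show ?thesis using L2lam by simp
    qed
    have L8: "L \<ge> 8"
      by (rule power2_le_imp_le[of 8 L]) (use L96 Lpos in auto)
    have Ln: "L^2 \<le> real n"
    proof -
      have "real n / \<Delta>^2 \<le> real n / 1"
        using D1' by (intro divide_left_mono) (auto simp: one_le_power)
      then show ?thesis using L2 by simp
    qed
    define D where "D i = ip n (x i) (x i)" for i
    have Dlow: "D i \<ge> L^2/4" if i: "i \<in> {1..m}" for i
    proof -
      have eq: "sqrt (real n) / (2 * \<Delta>) = L/2" by (simp add: L_def field_simps)
      have h: "sqrt (real n) / (2 * \<Delta>) \<le> nrm n (x i)" using xs i by blast
      then have "L/2 \<le> nrm n (x i)" by (simp only: eq)
      then have "(L/2)^2 \<le> (nrm n (x i))^2" by (rule power_mono) (use Lpos in auto)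
      moreover have "(nrm n (x i))^2 = D i"
        unfolding nrm_def D_def using ip_self_nonneg by simp
      ultimately show ?thesis by (simp add: power_divide)
    qed
    have Dpos': "D i > 0" if "i \<in> {1..m}" for i
      using Dlow[OF that] Lpos by (smt (verit) zero_less_power divide_pos_pos)
    have D2L: "D i \<ge> 2 * L" if "i \<in> {1..m}" for i
    proof -
      have "2 * L \<le> L * L / 4" using L8 Lpos by (simp add: field_simps)
      then show ?thesis using Dlow[OF that] by (simp add: power2_eq_square)
    qed
    define \<beta> where "\<beta> = L / (1 - \<eta>)"
    have beta_L: "\<beta> * (1 - \<eta>) = L" using eta_half by (simp add: \<beta>_def)
    have beta0: "\<beta> \<ge> 0" using Lpos eta_half by (simp add: \<beta>_def)
    have beta_eta: "\<beta> * \<eta> \<le> 2"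
    proof -
      have "L * \<eta> \<le> L * (1 / sqrt (real n))" using eta1 Lpos by (intro mult_left_mono) auto
      also have "L * (1 / sqrt (real n)) = 1 / \<Delta>" using sn2 npos by (simp add: L_def)
      also have "1 / \<Delta> \<le> 1" using D1' by simp
      finally have Le: "L * \<eta> \<le> 1" .
      have "\<beta> * \<eta> = (L * \<eta>) / (1 - \<eta>)" by (simp add: \<beta>_def)
      also have "\<dots> \<le> 1 / (1 - \<eta>)" using Le eta_half by (intro divide_right_mono) auto
      also have "\<dots> \<le> 2" using eta_half by (simp add: field_simps)
      finally show ?thesis .
    qed
    define f where "f i z = ip n (x i) z - \<beta> * z 0" for i z
    have linf: "lin (f i)" for i
      unfolding lin_def f_def
    proof (intro allI)
      fix y z :: "nat \<Rightarrow> real" and u v :: real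
      show "ip n (x i) (u *\<^sub>R y + v *\<^sub>R z) - \<beta> * (u *\<^sub>R y + v *\<^sub>R z) 0 = u * (ip n (x i) y - \<beta> * y 0) + v * (ip n (x i) z - \<beta> * z 0)"
        by (simp add: sc_app ip_add2 ip_scale2 algebra_simps)
    qed
    define \<Phi> where "\<Phi> S z = (\<Sum>i\<in>S. f i z / D i)" for S z
    have linPhi: "lin (\<Phi> S)" for S
      unfolding \<Phi>_def
    proof (rule lin_sum)
      fix i show "lin (\<lambda>z. f i z / D i)" using linf[of i] unfolding lin_def by (simp add: add_divide_distrib)
    qed
    have fTx: "f i ((1 - \<eta>) *\<^sub>R e0 + x j) = ip n (x i) (x j) - L" if "j \<in> {1..m}" for i j
    proof -
      have "f i ((1 - \<eta>) *\<^sub>R e0 + x j) = ip n (x i) (x j) - \<beta> * (1 - \<eta>)"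
        using x0[OF that] by (simp add: f_def ip_add2 ip_scale2 ip_e0 sc_app e0_app0)
      then show ?thesis using beta_L by simp
    qed
    have fTnx: "f i ((1 - \<eta>) *\<^sub>R e0 + - x j) = - ip n (x i) (x j) - L" if "j \<in> {1..m}" for i j
    proof -
      have "f i ((1 - \<eta>) *\<^sub>R e0 + - x j) = - ip n (x i) (x j) - \<beta> * (1 - \<eta>)"
        using x0[OF that] by (simp add: f_def ip_add2 ip_scale2 ip_e0 ip_neg ip_diff2 sc_app e0_app0)
      then show ?thesis using beta_L by simp
    qed
    have fR: "f i (R r) = \<kappa> * ip n (x i) r + \<beta> * (\<kappa> * \<eta>)" if "r \<in> Q1polar n m x" for i r
      using polar_0[OF that] by (simp add: f_def R_def ip_add2 ip_diff2 ip_scale2 ip_e0 sc_app e0_app0)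
    have fT: "f i (T (x i)) = D i - L" if "i \<in> {1..m}" for i
      using fTx[OF that, of i] by (simp add: T_def D_def)
    obtain W where W: "finite W" "W \<subseteq> vertices P" "P = convex hull W" "finite (vertices P)"
      using vert_lemma[OF Ppol] by blast
    have VP: "vertices P \<subseteq> P" by (auto simp: vertices_def extreme_point_of_def)
    have WK: "W \<subseteq> Kset n m x \<eta> \<kappa>" using W(2) VP PK by blast
    have lampos: "lam > 0" using lam1 by simp
    have serve: "\<exists>w\<in>W. f i w \<ge> (D i - L) / lam" if i: "i \<in> {1..m}" for i
    proof (rule ccontr)
      assume "\<not> ?thesis"
      then have lt: "\<And>w. w \<in> W \<Longrightarrow> f i w < (D i - L) / lam" by auto
      have "T (x i) \<in> Kset n m x \<eta> \<kappa>" by (rule TK[OF xQ[OF i]])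
      then obtain u where u: "u \<in> P" "T (x i) = lam *\<^sub>R u" using KP' by auto
      have "D i - L = lam * f i u" using fT[OF i] u(2) lin_scale[OF linf] by metis
      then have fu: "f i u = (D i - L) / lam" using lampos by (simp add: field_simps)
      have "f i u < (D i - L) / lam"
        by (rule lin_hull_lt[OF linf lt]) (use u W in auto)
      then show False using fu by simp
    qed
    define S where "S w = {i\<in>{1..m}. f i w \<ge> (D i - L) / lam}" for w
    have Sbound: "card (S w) \<le> n" if w: "w \<in> W" for w
    proof -
      define s where "s = card (S w)"
      have finS: "finite (S w)" by (simp add: S_def)
      have SS: "S w \<subseteq> {1..m}" by (auto simp: S_def)
      have wK: "w \<in> Kset n m x \<eta> \<kappa>" using WK w by auto
      have half: "48 * M / L^2 = 1 / (2 * lam)" using Mge lampos by (simp add: L2lam field_simps)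
      have lower: "real s * (48 * M / L^2) \<le> \<Phi> (S w) w"
      proof -
        have "(\<Sum>i\<in>S w. 48 * M / L^2) \<le> (\<Sum>i\<in>S w. f i w / D i)"
        proof (rule sum_mono)
          fix i assume iS: "i \<in> S w"
          then have i: "i \<in> {1..m}" and fi: "f i w \<ge> (D i - L) / lam" by (auto simp: S_def)
          have t1: "(D i - L) / D i \<ge> 1/2" using Dpos'[OF i] D2L[OF i] by (simp add: field_simps)
          have "48 * M / L^2 = (1/2) / lam" using half by simp
          also have "\<dots> \<le> ((D i - L) / D i) / lam" using t1 lampos by (intro divide_right_mono) auto
          also have "\<dots> = ((D i - L) / lam) / D i" by simp
          also have "\<dots> \<le> f i w / D i" using fi Dpos'[OF i] by (intro divide_right_mono) auto
          finally show "48 * M / L^2 \<le> f i w / D i" .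
        qed
        then show ?thesis by (simp add: \<Phi>_def s_def)
      qed
      have upper: "\<Phi> (S w) (0 + w) \<le> 1 + real s * (12 * \<kappa> / L^2)"
      proof (rule lin_hull_le[OF linPhi _ wK[unfolded Kdef]])
        fix g assume g: "g \<in> T ` Qset m x \<union> R ` Q1polar n m x"
        have Cge: "1 \<le> 1 + real s * (12 * \<kappa> / L^2)" using kap by simp
        show "\<Phi> (S w) (0 + g) \<le> 1 + real s * (12 * \<kappa> / L^2)"
        proof (cases "g \<in> T ` Qset m x")
          case True
          then obtain q where q: "q \<in> convex hull gens" "g = T q" using Qdef by auto
          have "\<Phi> (S w) ((1 - \<eta>) *\<^sub>R e0 + q) \<le> 1"
          proof (rule lin_hull_le[OF linPhi _ q(1)])
            fix g' assume "g' \<in> gens"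
            then consider (pos) j where "j \<in> {1..m}" "g' = x j" | (neg) j where "j \<in> {1..m}" "g' = - x j"
              unfolding gens_def by auto
            then show "\<Phi> (S w) ((1 - \<eta>) *\<^sub>R e0 + g') \<le> 1"
            proof cases
              case pos
              have "(\<Sum>i\<in>S w. f i ((1 - \<eta>) *\<^sub>R e0 + g') / D i) \<le> (\<Sum>i\<in>S w. if i = j then 1 else 0)"
              proof (rule sum_mono)
                fix i assume "i \<in> S w" then have i: "i \<in> {1..m}" using SS by auto
                show "f i ((1 - \<eta>) *\<^sub>R e0 + g') / D i \<le> (if i = j then 1 else 0)"
                proof (cases "i = j")
                  case True
                  then have "f i ((1 - \<eta>) *\<^sub>R e0 + g') / D i = (D i - L) / D i"
                    using fTx[OF pos(1), of i] pos(2) by (simp add: D_def)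
                  also have "\<dots> \<le> 1" using Dpos'[OF i] Lpos by (simp add: field_simps)
                  finally show ?thesis using True by simp
                next
                  case False
                  have "ip n (x i) (x j) \<le> L" using xip i pos(1) False by (force simp: L_def)
                  then have "f i ((1 - \<eta>) *\<^sub>R e0 + g') \<le> 0" using fTx[OF pos(1), of i] pos(2) by simp
                  then show ?thesis using False Dpos'[OF i] by (simp add: divide_nonpos_pos)
                qed
              qed
              also have "\<dots> \<le> 1" using finS by (simp add: sum.delta')
              finally show ?thesis by (simp add: \<Phi>_def)
            next
              case neg
              have "(\<Sum>i\<in>S w. f i ((1 - \<eta>) *\<^sub>R e0 + g') / D i) \<le> 0"
              proof (rule sum_nonpos)
                fix i assume "i \<in> S w" then have i: "i \<in> {1..m}" using SS by auto
                have "- ip n (x i) (x j) \<le> L"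
                proof (cases "i = j")
                  case True then show ?thesis using ip_self_nonneg[of n "x i"] Lpos by simp
                next
                  case False then show ?thesis using xip i neg(1) by (force simp: L_def)
                qed
                then have "f i ((1 - \<eta>) *\<^sub>R e0 + g') \<le> 0" using fTnx[OF neg(1), of i] neg(2) by simp
                then show "f i ((1 - \<eta>) *\<^sub>R e0 + g') / D i \<le> 0" using Dpos'[OF i] by (simp add: divide_nonpos_pos)
              qed
              then show ?thesis by (simp add: \<Phi>_def)
            qed
          qed
          then show ?thesis using q Cge by (simp add: T_def)
        next
          case False
          then obtain r where r: "r \<in> Q1polar n m x" "g = R r" using g by auto
          have "(\<Sum>i\<in>S w. f i (R r) / D i) \<le> (\<Sum>i\<in>S w. 12 * \<kappa> / L^2)"
          proof (rule sum_mono)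
            fix i assume "i \<in> S w" then have i: "i \<in> {1..m}" using SS by auto
            have "f i (R r) \<le> 3 * \<kappa>"
            proof -
              have "\<kappa> * ip n (x i) r \<le> \<kappa> * 1" using polar_ip[OF i r(1)] kap by (intro mult_left_mono) auto
              moreover have "\<beta> * (\<kappa> * \<eta>) \<le> 2 * \<kappa>" using beta_eta kap
                by (metis mult.left_commute mult.commute mult_right_mono less_imp_le)
              ultimately show ?thesis using fR[OF r(1), of i] by simp
            qed
            then have "f i (R r) / D i \<le> 3 * \<kappa> / D i" using Dpos'[OF i] by (intro divide_right_mono) auto
            also have "\<dots> \<le> 3 * \<kappa> / (L^2/4)" using Dlow[OF i] Dpos'[OF i] Lpos kap by (intro divide_left_mono) auto
            also have "\<dots> = 12 * \<kappa> / L^2" by simp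
            finally show "f i (R r) / D i \<le> 12 * \<kappa> / L^2" .
          qed
          then have "\<Phi> (S w) g \<le> real s * (12 * \<kappa> / L^2)" using r by (simp add: \<Phi>_def s_def)
          then show ?thesis by simp
        qed
      qed
      have A: "real s * (48 * M / L^2) \<le> 1 + real s * (12 * M / L^2)"
      proof -
        have "real s * (12 * \<kappa> / L^2) \<le> real s * (12 * M / L^2)"
          using Mge by (intro mult_left_mono divide_right_mono) auto
        then show ?thesis using lower upper by simp
      qed
      define p where "p = real s * M"
      have e1: "real s * (48 * M / L^2) * L^2 = 48 * p" using Lpos by (simp add: p_def field_simps)
      have e2: "(1 + real s * (12 * M / L^2)) * L^2 = L^2 + 12 * p" using Lpos by (simp add: p_def field_simps)
      have "real s * (48 * M / L^2) * L^2 \<le> (1 + real s * (12 * M / L^2)) * L^2"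
        using A Lpos by (intro mult_right_mono) auto
      then have "48 * p \<le> L^2 + 12 * p" using e1 e2 by simp
      then have p1: "36 * p \<le> L^2" by simp
      have "real s * 1 \<le> real s * M" using Mge by (intro mult_left_mono) auto
      then have "real s \<le> p" by (simp add: p_def)
      moreover have "p \<ge> 0" using Mge by (simp add: p_def)
      ultimately have "real s \<le> real n" using Ln p1 by linarith
      then show ?thesis unfolding s_def by simp
    qed
    have cover: "{1..m} \<subseteq> (\<Union>w\<in>W. S w)" using serve by (auto simp: S_def)
    have "m = card {1..m}" by simp
    also have "\<dots> \<le> card (\<Union>w\<in>W. S w)"
      by (rule card_mono) (use W(1) cover in \<open>auto simp: S_def\<close>)
    also have "\<dots> \<le> (\<Sum>w\<in>W. card (S w))" by (rule card_UN_le[OF W(1)])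
    also have "\<dots> \<le> (\<Sum>w\<in>W. n)" using Sbound by (intro sum_mono) auto
    also have "\<dots> = card W * n" by simp
    also have "\<dots> \<le> card (vertices P) * n" using W by (intro mult_right_mono card_mono) auto
    finally have "real m \<le> real (card (vertices P)) * real n" by (metis of_nat_le_iff of_nat_mult)
    then show ?thesis using n4 by (simp add: divide_le_eq)
  qed
qed

lemma D1_lemma:
  fixes C0 :: real and n m :: nat
  assumes h1: "C0 * real n \<le> real m" and h2: "real (nat \<lceil>exp (1 / C0^2) / C0\<rceil>) \<le> real n"
    and h3: "C0 * sqrt (ln (real m)) > 0"
  shows "C0 * sqrt (ln (real m)) \<ge> 1"
proof -
  have m0: "m > 0"
  proof (rule ccontr)
    assume "\<not> m > 0" then have "m = 0" by simp
    then show False using h3 by simp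
  qed
  have lnm: "ln (real m) \<ge> 0" using m0 by simp
  have C0pos: "C0 > 0"
    using h3 lnm by (metis real_sqrt_ge_zero zero_less_mult_iff not_le)
  have "exp (1 / C0^2) / C0 \<le> real n" using h2 real_nat_ceiling_ge order_trans by blast
  then have "exp (1 / C0^2) \<le> C0 * real n" using C0pos by (simp add: pos_divide_le_eq mult.commute)
  then have "exp (1 / C0^2) \<le> real m" using h1 by linarith
  then have "1 / C0^2 \<le> ln (real m)" using m0
    by (metis exp_ln of_nat_0_less_iff exp_le_cancel_iff)
  then have "sqrt (1 / C0^2) \<le> sqrt (ln (real m))" by (rule real_sqrt_le_mono)
  moreover have "sqrt (1 / C0^2) = 1 / C0" using C0pos by (simp add: real_sqrt_divide)
  ultimately have "1 / C0 \<le> sqrt (ln (real m))" by simp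
  then have "C0 * (1 / C0) \<le> C0 * sqrt (ln (real m))" using C0pos by (intro mult_left_mono) auto
  then show ?thesis using C0pos by simp
qed

theorem lemma3p6:
  fixes C1 C2 :: real
  assumes hC1: "C1_prop C1"
    and hC2: "C2_prop C2"
  shows "\<exists>N::nat. \<forall>n\<ge>N. \<forall>(m::nat) (x::nat \<Rightarrow> nat \<Rightarrow> real) (\<eta>::real) (\<kappa>::real) P.
    (let C0 = max C1 (100 * C2); \<Delta> = C0 * sqrt (ln (real m)) in
      C0 * real n \<le> real m \<and> real m \<le> exp (real n / C0) \<and>
      (\<forall>i\<in>{1..m}. x i \<in> Rn n \<and> sqrt (real n) / (2 * \<Delta>) \<le> nrm n (x i)
                   \<and> nrm n (x i) \<le> 2 * sqrt (real n) / \<Delta>) \<and>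
      (\<forall>i\<in>{1..m}. \<forall>j\<in>{1..m}. i \<noteq> j \<longrightarrow> \<bar>ip n (x i) (x j)\<bar> \<le> sqrt (real n) / \<Delta>) \<and>
      0 < \<kappa> \<and> 0 \<le> \<eta> \<and> \<eta> \<le> 1 / sqrt (real n) \<and>
      polytope P \<and> P \<subseteq> Rn1 n \<and>
      P \<subseteq> Kset n m x \<eta> \<kappa> \<and>
      Kset n m x \<eta> \<kappa> \<subseteq> (\<lambda>p. (real n / (96 * \<Delta>\<^sup>2 * max \<kappa> 1)) *\<^sub>R p) ` P
    \<longrightarrow> real (card (vertices P)) \<ge> real m / real n)"
  unfolding Let_def
  apply (intro exI[of _ "max 4 (nat \<lceil>exp (1 / (max C1 (100 * C2))^2) / max C1 (100 * C2)\<rceil>)"] allI impI)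
  subgoal premises prems for n m x \<eta> \<kappa> P
  proof (rule main_lemma[where \<Delta> = "max C1 (100 * C2) * sqrt (ln (real m))" and x = x and \<eta> = \<eta> and \<kappa> = \<kappa>])
    show "4 \<le> n" using prems(1) by simp
    show "max C1 (100 * C2) * sqrt (ln (real m)) > 0 \<Longrightarrow> max C1 (100 * C2) * sqrt (ln (real m)) \<ge> 1"
    proof (rule D1_lemma)
      show "max C1 (100 * C2) * real n \<le> real m" using prems(2) by blast
      show "real (nat \<lceil>exp (1 / (max C1 (100 * C2))^2) / max C1 (100 * C2)\<rceil>) \<le> real n"
        using prems(1) by simp
    qed
  qed (use prems(2) in blast)+
  done


end
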